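(* Let $G$ be a graph and let $C_1,C_2$ be two different simple cycles in $G$ that are not edge-disjoint (i.e. $E(C_1)\cap E(C_2)\neq\emptyset$). If $G$ does not contain any removable cycle of length at most $|C_1|+|C_2|$, then $G[V(C_1)\cup V(C_2)]$ is isomorphic to a complete graph.
   Context: A simple cycle in a graph $G$ is a sequence $(v_1,\dots,v_k)$ of $k>2$ distinct vertices with $\{v_i,v_{i+1}\}\in E(G)$ for $1\le i<k$ and $\{v_k,v_1\}\in E(G)$; $V(C)$ and $E(C)$ are its vertex and edge sets, and its length $|C|$ is $|V(C)|$. Two cycles are different if they are not the same cycle (their edge sets differ). $G[U]$ is the induced subgraph on $U$. A simple cycle $C$ in $G$ is removable if $G[V(C)]$ is neither isomorphic to a complete graph nor to a cycle graph of odd length. *)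

theory Defs
  imports Main
begin

definition graph :: "'a set \<Rightarrow> 'a set set \<Rightarrow> bool" where
  "graph V E \<longleftrightarrow> (\<forall>e\<in>E. \<exists>u v. e = {u, v} \<and> u \<noteq> v \<and> u \<in> V \<and> v \<in> V)"

definition induced_edges :: "'a set set \<Rightarrow> 'a set \<Rightarrow> 'a set set" where
  "induced_edges E U = {e \<in> E. e \<subseteq> U}"

definition graph_iso :: "'a set \<Rightarrow> 'a set set \<Rightarrow> 'b set \<Rightarrow> 'b set set \<Rightarrow> bool" where
  "graph_iso V1 E1 V2 E2 \<longleftrightarrow>
     (\<exists>f. bij_betw f V1 V2 \<and> (\<forall>u\<in>V1. \<forall>v\<in>V1. ({u, v} \<in> E1 \<longleftrightarrow> {f u, f v} \<in> E2)))"

definition complete_edges :: "nat \<Rightarrow> nat set set" where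
  "complete_edges n = {{i, j} | i j. i < n \<and> j < n \<and> i \<noteq> j}"

definition cycle_graph_edges :: "nat \<Rightarrow> nat set set" where
  "cycle_graph_edges n = {{i, (i + 1) mod n} | i. i < n}"

definition is_complete_graph :: "'a set \<Rightarrow> 'a set set \<Rightarrow> bool" where
  "is_complete_graph V E \<longleftrightarrow> (\<exists>n. graph_iso V E {0..<n} (complete_edges n))"

definition is_odd_cycle_graph :: "'a set \<Rightarrow> 'a set set \<Rightarrow> bool" where
  "is_odd_cycle_graph V E \<longleftrightarrow>
     (\<exists>n. n \<ge> 3 \<and> odd n \<and> graph_iso V E {0..<n} (cycle_graph_edges n))"

definition simple_cycle :: "'a set \<Rightarrow> 'a set set \<Rightarrow> 'a list \<Rightarrow> bool" where
  "simple_cycle V E c \<longleftrightarrow>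
     length c > 2 \<and> distinct c \<and> set c \<subseteq> V \<and>
     (\<forall>i < length c. {c ! i, c ! ((i + 1) mod length c)} \<in> E)"

definition cycle_verts :: "'a list \<Rightarrow> 'a set" where
  "cycle_verts c = set c"

definition cycle_edges :: "'a list \<Rightarrow> 'a set set" where
  "cycle_edges c = {{c ! i, c ! ((i + 1) mod length c)} | i. i < length c}"

definition removable :: "'a set \<Rightarrow> 'a set set \<Rightarrow> 'a list \<Rightarrow> bool" where
  "removable V E c \<longleftrightarrow> simple_cycle V E c \<and>
     \<not> is_complete_graph (cycle_verts c) (induced_edges E (cycle_verts c)) \<and>
     \<not> is_odd_cycle_graph (cycle_verts c) (induced_edges E (cycle_verts c))"

end

theory Submission
  imports Defs
begin


fun walk :: "'a set set \<Rightarrow> 'a list \<Rightarrow> bool" where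
  "walk E [] = True"
| "walk E [x] = True"
| "walk E (x # y # xs) = ({x, y} \<in> E \<and> walk E (y # xs))"

lemma walk_nth: "walk E xs \<longleftrightarrow> (\<forall>i. Suc i < length xs \<longrightarrow> {xs ! i, xs ! Suc i} \<in> E)"
proof (induction E xs rule: walk.induct)
  case (3 E x y xs)
  show ?case
  proof
    assume h: "walk E (x # y # xs)"
    show "\<forall>i. Suc i < length (x # y # xs) \<longrightarrow> {(x # y # xs) ! i, (x # y # xs) ! Suc i} \<in> E"
    proof (intro allI impI)
      fix i assume "Suc i < length (x # y # xs)"
      then show "{(x # y # xs) ! i, (x # y # xs) ! Suc i} \<in> E"
        using h 3 by (cases i) auto
    qed
  next
    assume h: "\<forall>i. Suc i < length (x # y # xs) \<longrightarrow> {(x # y # xs) ! i, (x # y # xs) ! Suc i} \<in> E"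
    have "{x,y} \<in> E" using h[rule_format, of 0] by simp
    moreover have "walk E (y # xs)" unfolding 3
      using h by (metis Suc_less_eq length_Cons nth_Cons_Suc)
    ultimately show "walk E (x # y # xs)" by simp
  qed
qed auto

lemma walk_append: "walk E (xs @ ys) \<longleftrightarrow> walk E xs \<and> walk E ys \<and> (xs \<noteq> [] \<longrightarrow> ys \<noteq> [] \<longrightarrow> {last xs, hd ys} \<in> E)"
proof (induction xs)
  case Nil then show ?case by simp
next
  case (Cons x xs)
  then show ?case by (cases xs; cases ys) auto
qed

lemma walk_rev: "walk E (rev xs) \<longleftrightarrow> walk E xs"
proof (induction xs)
  case Nil then show ?case by simp
next
  case (Cons x xs)
  then show ?case by (cases xs) (auto simp: walk_append insert_commute)
qed

lemma walk_take: "walk E xs \<Longrightarrow> walk E (take n xs)"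
  by (simp add: walk_nth)

lemma walk_drop: "walk E xs \<Longrightarrow> walk E (drop n xs)"
  by (simp add: walk_nth)

fun wedges :: "'a list \<Rightarrow> 'a set set" where
  "wedges [] = {}"
| "wedges [x] = {}"
| "wedges (x # y # xs) = insert {x, y} (wedges (y # xs))"

lemma wedges_append: "wedges (xs @ ys) = wedges xs \<union> wedges ys \<union> (if xs \<noteq> [] \<and> ys \<noteq> [] then {{last xs, hd ys}} else {})"
proof (induction xs)
  case Nil then show ?case by simp
next
  case (Cons x xs)
  then show ?case by (cases xs; cases ys) auto
qed

lemma wedges_rev: "wedges (rev xs) = wedges xs"
proof (induction xs)
  case Nil then show ?case by simp
next
  case (Cons x xs)
  then show ?case by (cases xs) (auto simp: wedges_append insert_commute)
qed

lemma wedges_nth: "wedges xs = {{xs ! i, xs ! Suc i} | i. Suc i < length xs}"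
proof (induction xs rule: wedges.induct)
  case (3 x y xs)
  have "{{(x # y # xs) ! i, (x # y # xs) ! Suc i} | i. Suc i < length (x # y # xs)}
     = insert {x, y} {{(y # xs) ! i, (y # xs) ! Suc i} | i. Suc i < length (y # xs)}"
    (is "?L = ?R")
  proof
    show "?L \<subseteq> ?R"
    proof
      fix e assume "e \<in> ?L"
      then obtain i where i: "e = {(x # y # xs) ! i, (x # y # xs) ! Suc i}" "Suc i < length (x # y # xs)" by blast
      show "e \<in> ?R"
      proof (cases i)
        case 0 then show ?thesis using i by simp
      next
        case (Suc j) then show ?thesis using i by auto
      qed
    qed
  next
    show "?R \<subseteq> ?L"
    proof
      fix e assume "e \<in> ?R"
      then consider "e = {x,y}" | j where "e = {(y # xs) ! j, (y # xs) ! Suc j}" "Suc j < length (y # xs)" by blast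
      then show "e \<in> ?L"
      proof cases
        case 1 then show ?thesis by (auto intro!: exI[of _ 0])
      next
        case 2 then show ?thesis by (auto intro!: exI[of _ "Suc j"])
      qed
    qed
  qed
  then show ?case using 3 by simp
qed auto

lemma cycle_edges_wedges:
  assumes "c \<noteq> []"
  shows "cycle_edges c = insert {last c, hd c} (wedges c)"
proof -
  let ?n = "length c"
  have "cycle_edges c = {{c ! i, c ! ((i + 1) mod ?n)} | i. i < ?n}" by (simp add: cycle_edges_def)
  also have "\<dots> = insert {c ! (?n - 1), c ! 0} {{c ! i, c ! Suc i} | i. Suc i < ?n}"
    (is "?L = ?R")
  proof
    show "?L \<subseteq> ?R"
    proof
      fix e assume "e \<in> ?L"
      then obtain i where i: "e = {c ! i, c ! ((i + 1) mod ?n)}" "i < ?n" by blast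
      show "e \<in> ?R"
      proof (cases "Suc i < ?n")
        case True then show ?thesis using i by auto
      next
        case False then have "Suc i = ?n" using i by auto
        then have "i = ?n - 1" "(i+1) mod ?n = 0" by auto
        then show ?thesis using i by simp
      qed
    qed
  next
    show "?R \<subseteq> ?L"
    proof
      fix e assume "e \<in> ?R"
      then consider "e = {c ! (?n - 1), c ! 0}" | j where "e = {c ! j, c ! Suc j}" "Suc j < ?n" by blast
      then show "e \<in> ?L"
      proof cases
        case 1
        have "(?n - 1 + 1) mod ?n = 0" using assms by simp
        then show ?thesis using 1 assms by (auto intro!: exI[of _ "?n - 1"])
      next
        case 2 then show ?thesis by (auto intro!: exI[of _ j])
      qed
    qed
  qed
  also have "\<dots> = insert {last c, hd c} (wedges c)"
    using assms by (simp add: wedges_nth last_conv_nth hd_conv_nth)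
  finally show ?thesis .
qed

lemma cycle_edges_swap: "cycle_edges (B @ A) = cycle_edges (A @ B)"
proof (cases "A = [] \<or> B = []")
  case True then show ?thesis by auto
next
  case False
  then show ?thesis by (auto simp: cycle_edges_wedges wedges_append insert_commute)
qed

lemma cycle_edges_rev: "cycle_edges (rev c) = cycle_edges c"
  by (cases "c = []") (auto simp: cycle_edges_wedges wedges_rev hd_rev last_rev insert_commute)




definition cyc :: "'a set \<Rightarrow> 'a set set \<Rightarrow> 'a list \<Rightarrow> bool" where
  "cyc V E c \<longleftrightarrow> 2 < length c \<and> distinct c \<and> set c \<subseteq> V \<and> walk E c \<and> {last c, hd c} \<in> E"

lemma walk_wedges: "walk E xs \<longleftrightarrow> wedges xs \<subseteq> E"
  by (auto simp: walk_nth wedges_nth)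

lemma simple_cycle_cyc: "simple_cycle V E c \<longleftrightarrow> cyc V E c"
proof -
  have "(\<forall>i < length c. {c ! i, c ! ((i + 1) mod length c)} \<in> E) \<longleftrightarrow> cycle_edges c \<subseteq> E"
    by (auto simp: cycle_edges_def)
  moreover have "c \<noteq> [] \<Longrightarrow> cycle_edges c \<subseteq> E \<longleftrightarrow> walk E c \<and> {last c, hd c} \<in> E"
    by (auto simp add: cycle_edges_wedges walk_wedges)
  ultimately show ?thesis unfolding simple_cycle_def cyc_def
    by (metis length_greater_0_conv less_trans zero_less_numeral)
qed

definition clique :: "'a set set \<Rightarrow> 'a set \<Rightarrow> bool" where
  "clique E S \<longleftrightarrow> (\<forall>x\<in>S. \<forall>y\<in>S. x \<noteq> y \<longrightarrow> {x, y} \<in> E)"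

lemma complete_clique:
  assumes "is_complete_graph S (induced_edges E S)"
  shows "clique E S"
proof -
  obtain n f where bij: "bij_betw f S {0..<n}"
    and iso: "\<forall>u\<in>S. \<forall>v\<in>S. ({u, v} \<in> induced_edges E S \<longleftrightarrow> {f u, f v} \<in> complete_edges n)"
    using assms unfolding is_complete_graph_def graph_iso_def by blast
  show ?thesis unfolding clique_def
  proof (intro ballI impI)
    fix x y assume xy: "x \<in> S" "y \<in> S" "x \<noteq> y"
    then have "f x \<noteq> f y" "f x < n" "f y < n" using bij unfolding bij_betw_def inj_on_def by auto
    then have "{f x, f y} \<in> complete_edges n" unfolding complete_edges_def by blast
    then show "{x, y} \<in> E" using iso xy unfolding induced_edges_def by auto
  qed
qed

lemma odd_cycle_card:
  assumes "is_odd_cycle_graph S F"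
  shows "odd (card S)"
  using assms unfolding is_odd_cycle_graph_def graph_iso_def
  by (metis bij_betw_same_card card_atLeastLessThan diff_zero)

lemma cycle_graph_nb:
  assumes "{k, j} \<in> cycle_graph_edges n" "k \<noteq> j"
  shows "j = Suc k mod n \<or> k = Suc j mod n"
  using assms unfolding cycle_graph_edges_def by (auto simp: doubleton_eq_iff)

lemma suc_mod_inj: "j1 < n \<Longrightarrow> j2 < n \<Longrightarrow> Suc j1 mod n = Suc j2 mod n \<Longrightarrow> j1 = j2"
  by (cases "Suc j1 = n"; cases "Suc j2 = n") auto

lemma odd_cycle_deg:
  assumes "is_odd_cycle_graph S F" "x \<in> S" "y1 \<in> S" "y2 \<in> S" "y3 \<in> S"
    "y1 \<noteq> y2" "y1 \<noteq> y3" "y2 \<noteq> y3" "x \<noteq> y1" "x \<noteq> y2" "x \<noteq> y3"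
    "{x, y1} \<in> F" "{x, y2} \<in> F" "{x, y3} \<in> F"
  shows False
proof -
  obtain n f where bij: "bij_betw f S {0..<n}"
    and iso: "\<forall>u\<in>S. \<forall>v\<in>S. ({u, v} \<in> F \<longleftrightarrow> {f u, f v} \<in> cycle_graph_edges n)"
    using assms unfolding is_odd_cycle_graph_def graph_iso_def by blast
  have inj: "inj_on f S" and rng: "\<And>z. z \<in> S \<Longrightarrow> f z < n" using bij unfolding bij_betw_def by auto
  have d: "f y1 \<noteq> f y2" "f y1 \<noteq> f y3" "f y2 \<noteq> f y3" "f x \<noteq> f y1" "f x \<noteq> f y2" "f x \<noteq> f y3"
    using assms inj unfolding inj_on_def by metis+
  have e: "{f x, f y1} \<in> cycle_graph_edges n" "{f x, f y2} \<in> cycle_graph_edges n" "{f x, f y3} \<in> cycle_graph_edges n"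
    using iso assms by auto
  have r: "f y1 < n" "f y2 < n" "f y3 < n" using rng assms by auto
  from cycle_graph_nb[OF e(1) d(4)] cycle_graph_nb[OF e(2) d(5)] cycle_graph_nb[OF e(3) d(6)]
  show False using d r suc_mod_inj by metis
qed

context
  fixes V :: "'a set" and E :: "'a set set" and L :: nat
  assumes NR: "\<forall>C. simple_cycle V E C \<and> length C \<le> L \<longrightarrow> \<not> removable V E C"
begin

lemma F0:
  assumes "cyc V E c" "length c \<le> L"
  shows "is_complete_graph (set c) (induced_edges E (set c)) \<or> is_odd_cycle_graph (set c) (induced_edges E (set c))"
  using NR assms by (auto simp: simple_cycle_cyc removable_def cycle_verts_def)

lemma F1:
  assumes "cyc V E c" "length c \<le> L" "even (length c)"
  shows "clique E (set c)"
proof -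
  have "card (set c) = length c" using assms(1) by (simp add: cyc_def distinct_card)
  then have "\<not> is_odd_cycle_graph (set c) (induced_edges E (set c))"
    using odd_cycle_card assms(3) by metis
  then show ?thesis using F0[OF assms(1,2)] complete_clique by blast
qed

lemma F2:
  assumes "cyc V E c" "length c \<le> L" "x \<in> set c" "y1 \<in> set c" "y2 \<in> set c" "y3 \<in> set c"
    "y1 \<noteq> y2" "y1 \<noteq> y3" "y2 \<noteq> y3" "x \<noteq> y1" "x \<noteq> y2" "x \<noteq> y3"
    "{x, y1} \<in> E" "{x, y2} \<in> E" "{x, y3} \<in> E"
  shows "clique E (set c)"
proof -
  have "\<not> is_odd_cycle_graph (set c) (induced_edges E (set c))"
  proof
    assume "is_odd_cycle_graph (set c) (induced_edges E (set c))"
    moreover have "{x, y1} \<in> induced_edges E (set c)" "{x, y2} \<in> induced_edges E (set c)" "{x, y3} \<in> induced_edges E (set c)"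
      using assms unfolding induced_edges_def by auto
    ultimately show False using odd_cycle_deg assms by metis
  qed
  then show ?thesis using F0[OF assms(1,2)] complete_clique by blast
qed

end



lemma ear_exists:
  assumes dP: "distinct P" and lP: "3 \<le> length P"
    and dQ: "distinct Q" and wQ: "walk E Q" and lQ: "3 \<le> length Q"
    and hd: "hd P = hd Q" and lst: "last P = last Q" and ne: "P \<noteq> Q"
  shows "\<exists>a b R. a < b \<and> b < length P \<and> distinct R \<and> set R \<inter> set P = {} \<and> set R \<subseteq> set Q
     \<and> walk E (P ! a # R @ [P ! b]) \<and> (R \<noteq> [] \<or> a + 2 \<le> b)
     \<and> \<not> (R = [] \<and> a = 0 \<and> b = length P - 1) \<and> length R + 2 \<le> length Q"
proof -
  have nP: "P \<noteq> []" and nQ: "Q \<noteq> []" using lP lQ by auto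
  have P0: "P ! 0 = Q ! 0" using hd nP nQ by (simp add: hd_conv_nth)
  have PL: "P ! (length P - 1) = Q ! (length Q - 1)" using lst nP nQ by (simp add: last_conv_nth)
  have "\<exists>i. i < min (length P) (length Q) \<and> P ! i \<noteq> Q ! i"
  proof (rule ccontr)
    assume "\<not> ?thesis"
    then have eq: "\<And>i. i < min (length P) (length Q) \<Longrightarrow> P ! i = Q ! i" by blast
    have "length P = length Q"
    proof (cases "length P \<le> length Q")
      case True
      then have "Q ! (length P - 1) = Q ! (length Q - 1)" using eq[of "length P - 1"] PL lP by simp
      then have "length P - 1 = length Q - 1" using nth_eq_iff_index_eq[OF dQ, of "length P - 1" "length Q - 1"] True lP lQ by simp
      then show ?thesis using lP lQ by simp
    next
      case False
      then have "P ! (length Q - 1) = P ! (length P - 1)" using eq[of "length Q - 1"] PL lQ by simp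
      then have "length Q - 1 = length P - 1" using nth_eq_iff_index_eq[OF dP, of "length Q - 1" "length P - 1"] False lP lQ by simp
      then show ?thesis using lP lQ by simp
    qed
    then have "P = Q" using eq by (simp add: nth_equalityI)
    then show False using ne by simp
  qed
  define i0 where "i0 = (LEAST i. i < min (length P) (length Q) \<and> P ! i \<noteq> Q ! i)"
  have i0: "i0 < min (length P) (length Q)" "P ! i0 \<noteq> Q ! i0"
    using LeastI_ex[OF \<open>\<exists>i. _\<close>] unfolding i0_def by auto
  have before: "\<And>j. j < i0 \<Longrightarrow> P ! j = Q ! j"
  proof -
    fix j assume jl: "j < i0"
    then have "\<not> (j < min (length P) (length Q) \<and> P ! j \<noteq> Q ! j)"
      unfolding i0_def by (rule not_less_Least)
    then show "P ! j = Q ! j" using jl i0(1) by linarith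
  qed
  have i0pos: "0 < i0" using i0 P0 by (cases i0) auto
  have inP: "P ! (length P - 1) \<in> set P" using nP by simp
  have exl: "\<exists>l. i0 \<le> l \<and> l < length Q \<and> Q ! l \<in> set P"
    using i0 PL nQ inP by (intro exI[of _ "length Q - 1"]) auto
  define l where "l = (LEAST l. i0 \<le> l \<and> l < length Q \<and> Q ! l \<in> set P)"
  have l: "i0 \<le> l" "l < length Q" "Q ! l \<in> set P" using LeastI_ex[OF exl] unfolding l_def by auto
  have lmin: "\<And>t. i0 \<le> t \<Longrightarrow> t < l \<Longrightarrow> Q ! t \<notin> set P"
  proof -
    fix t assume t: "i0 \<le> t" "t < l"
    have "\<not> (i0 \<le> t \<and> t < length Q \<and> Q ! t \<in> set P)"
      using t(2) unfolding l_def by (rule not_less_Least)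
    then show "Q ! t \<notin> set P" using t l(2) by auto
  qed
  obtain j where j: "j < length P" "P ! j = Q ! l" using l(3) by (metis in_set_conv_nth)
  have ji0: "i0 \<le> j"
  proof (rule ccontr)
    assume "\<not> i0 \<le> j"
    then have "Q ! j = Q ! l" using before j by simp
    then have "j = l" using nth_eq_iff_index_eq[OF dQ, of j l] l j i0 \<open>\<not> i0 \<le> j\<close> by simp
    then show False using l \<open>\<not> i0 \<le> j\<close> by simp
  qed
  define R where "R = drop i0 (take l Q)"
  have lenR: "length R = l - i0" using l unfolding R_def by simp
  have "distinct R" unfolding R_def using dQ by (simp add: distinct_drop distinct_take)
  moreover have "set R \<inter> set P = {}"
  proof -
    have Rnth: "\<And>t. t < length R \<Longrightarrow> R ! t = Q ! (i0 + t)" unfolding R_def using l by simp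
    have "x \<notin> set P" if "x \<in> set R" for x
    proof -
      obtain t where t: "t < length R" "R ! t = x" using \<open>x \<in> set R\<close> by (auto simp: in_set_conv_nth)
      then show ?thesis using Rnth[OF t(1)] lmin[of "i0 + t"] lenR by simp
    qed
    then show ?thesis by blast
  qed
  moreover have "set R \<subseteq> set Q" unfolding R_def by (meson in_set_dropD in_set_takeD subsetI)
  moreover have "walk E (P ! (i0 - 1) # R @ [P ! j])"
  proof -
    have "P ! (i0 - 1) = Q ! (i0 - 1)" using before i0pos by simp
    have "take (Suc l) Q = take l Q @ [Q ! l]" using l by (simp add: take_Suc_conv_app_nth)
    then have "drop (i0 - 1) (take (Suc l) Q) = drop (i0 - 1) (take l Q) @ [Q ! l]" using l i0pos by simp
    also have "drop (i0 - 1) (take l Q) = Q ! (i0 - 1) # R"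
      unfolding R_def using l i0pos
      by (metis Cons_nth_drop_Suc Suc_diff_1 diff_less length_take less_le_trans min.absorb4 nth_take zero_less_one)
    finally have "drop (i0 - 1) (take (Suc l) Q) = P ! (i0 - 1) # R @ [P ! j]"
      using \<open>P ! (i0 - 1) = Q ! (i0 - 1)\<close> j by simp
    moreover have "walk E (drop (i0 - 1) (take (Suc l) Q))" using wQ by (simp add: walk_take walk_drop)
    ultimately show ?thesis by simp
  qed
  moreover have "R \<noteq> [] \<or> i0 - 1 + 2 \<le> j"
  proof (cases "R = []")
    case True
    then have "l = i0" using lenR l by simp
    then have "j \<noteq> i0" using j i0 by auto
    then show ?thesis using ji0 i0pos by simp
  qed simp
  moreover have "\<not> (R = [] \<and> i0 - 1 = 0 \<and> j = length P - 1)"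
  proof
    assume h: "R = [] \<and> i0 - 1 = 0 \<and> j = length P - 1"
    then have "l = 1" using lenR l i0pos by simp
    then have "Q ! 1 = Q ! (length Q - 1)" using j h PL by simp
    then have "1 = length Q - 1" using nth_eq_iff_index_eq[OF dQ, of 1 "length Q - 1"] lQ by simp
    then show False using lQ by simp
  qed
  moreover have "length R + 2 \<le> length Q" using lenR l i0pos by simp
  ultimately show ?thesis using ji0 i0pos j(1)
    by (intro exI[of _ "i0 - 1"] exI[of _ j] exI[of _ R]) auto
qed




lemma cliqueD: "clique E S \<Longrightarrow> x \<in> S \<Longrightarrow> y \<in> S \<Longrightarrow> x \<noteq> y \<Longrightarrow> {x, y} \<in> E"
  unfolding clique_def by blast

lemma clique_subset: "clique E S \<Longrightarrow> T \<subseteq> S \<Longrightarrow> clique E T"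
  unfolding clique_def by blast

lemma last_drop_take: "a \<le> b \<Longrightarrow> b < length P \<Longrightarrow> last (drop a (take (Suc b) P)) = P ! b"
  by (simp add: last_conv_nth)

lemma hd_drop_take: "a \<le> b \<Longrightarrow> b < length P \<Longrightarrow> hd (drop a (take (Suc b) P)) = P ! a"
  by (simp add: hd_conv_nth)

context
  fixes V :: "'a set" and E :: "'a set set" and L :: nat
  assumes NR: "\<forall>C. simple_cycle V E C \<and> length C \<le> L \<longrightarrow> \<not> removable V E C"
begin

lemma degen:
  assumes "cyc V E Z" "length Z \<le> L" "2 \<le> length R" "set R \<inter> set P = {}" "distinct R"
    "pa \<in> set P" "pb \<in> set P" "pa \<noteq> pb" "{pa, hd R} \<in> E" "{R ! 0, R ! 1} \<in> E" "{hd R, pb} \<in> E"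
    "set P \<union> set R \<subseteq> set Z"
  shows "clique E (set P)"
proof -
  have l01: "0 < length R" "1 < length R" using assms(3) by auto
  have r0: "R ! 0 \<in> set R" "R ! 1 \<in> set R" using nth_mem[OF l01(1)] nth_mem[OF l01(2)] by auto
  have hdR: "hd R = R ! 0" using l01 by (cases R) auto
  have "R ! 0 \<noteq> R ! 1" using nth_eq_iff_index_eq[OF assms(5) l01] by simp
  moreover have m: "R ! 0 \<in> set Z" "R ! 1 \<in> set Z" "pa \<in> set Z" "pb \<in> set Z"
    using r0 assms(6,7,12) by auto
  moreover have n: "pa \<noteq> R ! 1" "R ! 1 \<noteq> pb" "R ! 0 \<noteq> pa" "R ! 0 \<noteq> pb"
    using r0 assms(4,6,7) by auto
  moreover have e: "{R ! 0, pa} \<in> E" "{R ! 0, R ! 1} \<in> E" "{R ! 0, pb} \<in> E"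
    using assms(9,10,11) hdR by (auto simp: insert_commute)
  ultimately have "clique E (set Z)"
    using F2[OF NR assms(1,2), of "R ! 0" pa "R ! 1" pb] by (simp add: assms(8))
  then show ?thesis using assms(12) clique_subset by blast
qed

lemma chord:
  assumes cP: "cyc V E P" and lenP: "length P \<le> L" and ab: "a + 2 \<le> b" "b < length P"
    and nd: "\<not> (a = 0 \<and> b = length P - 1)" and e: "{P ! a, P ! b} \<in> E"
  shows "clique E (set P)"
proof -
  have dP: "distinct P" and wP: "walk E P" and cl: "{last P, hd P} \<in> E" and l3: "2 < length P"
    using cP by (auto simp: cyc_def)
  define pr where "pr = (if a = 0 then length P - 1 else a - 1)"
  have pr: "pr < length P" "pr \<noteq> a" "pr \<noteq> Suc a" "pr \<noteq> b" using ab nd l3 unfolding pr_def by auto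
  have epr: "{P ! a, P ! pr} \<in> E"
  proof (cases "a = 0")
    case True
    have "P \<noteq> []" using l3 by auto
    then have "last P = P ! (length P - 1)" "hd P = P ! 0" by (simp_all add: last_conv_nth hd_conv_nth)
    then show ?thesis using cl True unfolding pr_def by (simp add: insert_commute)
  next
    case False
    have "Suc (a - 1) < length P" using False ab by auto
    then have "{P ! (a - 1), P ! Suc (a - 1)} \<in> E" using wP[unfolded walk_nth, rule_format, of "a - 1"] by blast
    then show ?thesis using False unfolding pr_def by (simp add: insert_commute)
  qed
  have esuc: "{P ! a, P ! Suc a} \<in> E" using wP ab unfolding walk_nth by auto
  have idx: "Suc a < length P" "a < length P" using ab by auto
  show ?thesis
    apply (rule F2[OF NR cP lenP, of "P ! a" "P ! Suc a" "P ! b" "P ! pr"])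
    using idx ab pr e epr esuc nth_eq_iff_index_eq[OF dP] by auto
qed

lemma ear_clique:
  assumes cP: "cyc V E P" and cQ: "cyc V E Q" and hd: "hd P = hd Q" and lst: "last P = last Q"
    and ne: "P \<noteq> Q" and len: "length P + length Q \<le> L"
  shows "clique E (set P)"
proof (cases "even (length P)")
  case True
  then show ?thesis using F1[OF NR cP] len by simp
next
  case odd: False
  have dP: "distinct P" and wP: "walk E P" and cl: "{last P, hd P} \<in> E" and l3: "2 < length P"
    and VP: "set P \<subseteq> V"
    using cP by (auto simp: cyc_def)
  have dQ: "distinct Q" and wQ: "walk E Q" and l3Q: "2 < length Q" and VQ: "set Q \<subseteq> V"
    using cQ by (auto simp: cyc_def)
  obtain a b R where ab: "a < b" "b < length P" and dR: "distinct R" and disj: "set R \<inter> set P = {}"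
    and RQ: "set R \<subseteq> set Q" and wW: "walk E (P ! a # R @ [P ! b])"
    and nt: "R \<noteq> [] \<or> a + 2 \<le> b" and nd: "\<not> (R = [] \<and> a = 0 \<and> b = length P - 1)"
    and lR: "length R + 2 \<le> length Q"
    using ear_exists[OF dP _ dQ wQ _ hd lst ne] l3 l3Q by auto
  have wR: "walk E R" using wW walk_append[of E "[P ! a]" "R @ [P ! b]"] walk_append[of E R "[P ! b]"] by simp
  have eA: "R \<noteq> [] \<Longrightarrow> {P ! a, hd R} \<in> E"
    using wW walk_append[of E "[P ! a]" "R @ [P ! b]"] by simp
  have eB: "R \<noteq> [] \<Longrightarrow> {last R, P ! b} \<in> E"
    using wW walk_append[of E "[P ! a]" "R @ [P ! b]"] walk_append[of E R "[P ! b]"] by simp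
  have e0: "R = [] \<Longrightarrow> {P ! a, P ! b} \<in> E" using wW by simp
  have e12: "2 \<le> length R \<Longrightarrow> {R ! 0, R ! 1} \<in> E" using wR unfolding walk_nth by auto
  have VR: "set R \<subseteq> V" using RQ VQ by blast
  define A where "A = drop a (take (Suc b) P)"
  define X where "X = A @ rev R"
  define Y where "Y = drop b P @ take (Suc a) P @ R"
  have A: "A \<noteq> []" "hd A = P ! a" "last A = P ! b" "set A \<subseteq> set P" "distinct A" "walk E A"
      "length A = Suc b - a"
  proof -
    have "a \<le> b" using ab by simp
    then have "hd A = P ! a" "last A = P ! b" unfolding A_def
      using hd_drop_take[of a b P] last_drop_take[of a b P] ab by simp_all
    moreover have "length A = Suc b - a" unfolding A_def using ab by simp
    moreover have "set A \<subseteq> set P" "distinct A" "walk E A" unfolding A_def using dP wP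
      by (auto simp: walk_take walk_drop distinct_drop distinct_take dest: in_set_dropD in_set_takeD)
    ultimately show "A \<noteq> []" "hd A = P ! a" "last A = P ! b" "set A \<subseteq> set P" "distinct A" "walk E A"
      "length A = Suc b - a" using ab by auto
  qed
  have lX: "length X = Suc b - a + length R" unfolding X_def using A by simp
  have lY: "length Y = length P - b + Suc a + length R" unfolding Y_def using ab by simp
  have cX: "cyc V E X"
  proof -
    have "2 < length X"
    proof (cases "R = []")
      case True
      then show ?thesis using lX nt ab by auto
    next
      case False
      then have "0 < length R" by simp
      then show ?thesis using lX ab by linarith
    qed
    moreover have "distinct X" unfolding X_def using A dR disj by auto
    moreover have "set X \<subseteq> V" unfolding X_def using A VP VR by auto
    moreover have "walk E X" unfolding X_def using A wR eB
      by (auto simp: walk_append walk_rev hd_rev insert_commute)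
    moreover have "{last X, hd X} \<in> E" unfolding X_def using A eA e0
      by (cases "R = []") (auto simp: last_rev insert_commute)
    ultimately show ?thesis unfolding cyc_def by blast
  qed
  have cY: "cyc V E Y"
  proof -
    have "2 < length Y"
    proof (cases "R = []")
      case True
      then show ?thesis using lY nt nd ab by (cases "a = 0") auto
    next
      case False
      then have "0 < length R" by simp
      then show ?thesis using lY ab by linarith
    qed
    moreover have "distinct Y"
    proof -
      have "set (take (Suc a) P) \<subseteq> set (take b P)" using ab by (simp add: set_take_subset_set_take)
      moreover have "set (take b P) \<inter> set (drop b P) = {}" using dP
        by (metis append_take_drop_id distinct_append)
      moreover have "set (take (Suc a) P) \<subseteq> set P" "set (drop b P) \<subseteq> set P"
        by (auto dest: in_set_dropD in_set_takeD)
      ultimately show ?thesis unfolding Y_def using dP dR disj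
        by (auto simp: distinct_drop distinct_take)
    qed
    moreover have "set Y \<subseteq> V" unfolding Y_def using VP VR by (auto dest: in_set_dropD in_set_takeD)
    moreover have "walk E Y"
    proof -
      have "last (drop b P) = last P" using ab by simp
      moreover have "hd (take (Suc a) P @ R) = hd P" using l3 by (cases P) auto
      moreover have "last (take (Suc a) P) = P ! a" using last_drop_take[of 0 a P] ab by simp
      ultimately show ?thesis unfolding Y_def using wP wR cl eA ab
        by (auto simp: walk_append walk_take walk_drop)
    qed
    moreover have "{last Y, hd Y} \<in> E"
    proof -
      have "hd Y = P ! b" unfolding Y_def using ab by (simp add: hd_drop_conv_nth)
      moreover have "last Y = (if R = [] then P ! a else last R)"
      proof -
        have "take (Suc a) P \<noteq> []" using ab by auto
        then show ?thesis using last_drop_take[of 0 a P] ab by (simp add: last_append Y_def)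
      qed
      ultimately show ?thesis using eB e0 by auto
    qed
    ultimately show ?thesis unfolding cyc_def by blast
  qed
  have LX: "length X \<le> L" using lX lR len ab by simp
  have LY: "length Y \<le> L" using lY lR len ab by simp
  have PL: "length P \<le> L" using len by simp
  have sum: "length X + length Y = length P + 2 + 2 * length R" using lX lY ab by simp
  have setX: "set X = set A \<union> set R" unfolding X_def by auto
  have setY: "set Y = set (drop b P) \<union> set (take (Suc a) P) \<union> set R" unfolding Y_def by auto
  have pabX: "P ! a \<in> set X" "P ! b \<in> set X" unfolding setX using A hd_in_set[of A] last_in_set[of A] by auto
  have pabY: "P ! a \<in> set Y" "P ! b \<in> set Y"
  proof -
    have "a < length (take (Suc a) P)" using ab by simp
    from nth_mem[OF this] have "P ! a \<in> set (take (Suc a) P)" by simp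
    then show "P ! a \<in> set Y" unfolding setY by blast
    have "0 < length (drop b P)" using ab by simp
    from nth_mem[OF this] have "P ! b \<in> set (drop b P)" using ab by simp
    then show "P ! b \<in> set Y" unfolding setY by blast
  qed
  have pab: "P ! a \<noteq> P ! b" using ab nth_eq_iff_index_eq[OF dP] by simp
  have pinP: "P ! a \<in> set P" "P ! b \<in> set P" using ab by auto
  have hdRs: "R \<noteq> [] \<Longrightarrow> hd R \<in> set R" by simp
  show ?thesis
  proof (cases "even (length X)")
    case evX: True
    then have clX: "clique E (set X)" using F1[OF NR cX LX] by simp
    show ?thesis
    proof (cases "b = Suc a")
      case True
      then have Rne: "R \<noteq> []" using nt by auto
      have "even (length R)" using evX lX True by simp
      moreover have "length R \<noteq> 0" using Rne by simp
      ultimately have m2: "2 \<le> length R" by presburger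
      have hR1: "hd R \<in> set R" by (rule hd_in_set[OF Rne])
      have hRP: "hd R \<notin> set P" using hR1 disj by auto
      have hR: "hd R \<in> set R" "hd R \<noteq> P ! b" using hR1 apply simp using hRP pinP(2) by auto
      have "hd R \<in> set X" using hR unfolding setX by blast
      then have "{hd R, P ! b} \<in> E" using cliqueD[OF clX _ pabX(2) hR(2)] by blast
      moreover have "set P \<subseteq> set Y"
      proof -
        have "set P = set (drop b P) \<union> set (take b P)"
          by (metis append_take_drop_id set_append sup_commute)
        then show ?thesis unfolding setY using True by auto
      qed
      moreover have "set R \<subseteq> set Y" unfolding setY by blast
      ultimately show ?thesis
        using degen[OF cY LY m2 disj dR pinP pab eA[OF Rne] e12[OF m2]] by blast
    next
      case False
      then have b2: "a + 2 \<le> b" using ab by simp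
      have e: "{P ! a, P ! b} \<in> E" using cliqueD[OF clX pabX pab] .
      show ?thesis
      proof (cases "a = 0 \<and> b = length P - 1")
        case True
        then have "A = P" unfolding A_def using l3 by simp
        then show ?thesis using clX setX clique_subset by blast
      next
        case False
        show ?thesis by (rule chord[OF cP PL b2 ab(2) False e])
      qed
    qed
  next
    case odX: False
    then have evY: "even (length Y)" using sum odd by presburger
    then have clY: "clique E (set Y)" using F1[OF NR cY LY] by simp
    show ?thesis
    proof (cases "a = 0 \<and> b = length P - 1")
      case True
      then have Rne: "R \<noteq> []" using nd by auto
      have "length Y = 2 + length R" using lY True l3 by simp
      then have "even (length R)" using evY by simp
      moreover have "length R \<noteq> 0" using Rne by simp
      ultimately have m2: "2 \<le> length R" by presburger
      have hR1: "hd R \<in> set R" by (rule hd_in_set[OF Rne])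
      have hRP: "hd R \<notin> set P" using hR1 disj by auto
      have hR: "hd R \<in> set R" "hd R \<noteq> P ! b" using hR1 apply simp using hRP pinP(2) by auto
      have "hd R \<in> set Y" using hR unfolding setY by blast
      then have "{hd R, P ! b} \<in> E" using cliqueD[OF clY _ pabY(2) hR(2)] by blast
      moreover have "A = P" unfolding A_def using l3 True by simp
      then have "set P \<union> set R \<subseteq> set X" unfolding setX by blast
      ultimately show ?thesis
        using degen[OF cX LX m2 disj dR pinP pab eA[OF Rne] e12[OF m2]] by blast
    next
      case False
      show ?thesis
      proof (cases "b = Suc a")
        case True
        have "set P = set (drop b P) \<union> set (take b P)"
          by (metis append_take_drop_id set_append sup_commute)
        then have "set P \<subseteq> set Y" unfolding setY using True by auto
        then show ?thesis using clY clique_subset by blast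
      next
        case nb: False
        then have b2: "a + 2 \<le> b" using ab by simp
        have e: "{P ! a, P ! b} \<in> E" using cliqueD[OF clY pabY pab] .
        show ?thesis by (rule chord[OF cP PL b2 ab(2) False e])
      qed
    qed
  qed
qed

end



lemma cyc_normalize:
  assumes c: "cyc V E c" and e: "e \<in> cycle_edges c"
  shows "\<exists>P. cyc V E P \<and> set P = set c \<and> length P = length c \<and> cycle_edges P = cycle_edges c
           \<and> e = {hd P, last P}"
proof -
  have d: "distinct c" and w: "walk E c" and cl: "{last c, hd c} \<in> E" and l: "2 < length c" and Vc: "set c \<subseteq> V"
    using c by (auto simp: cyc_def)
  have ne: "c \<noteq> []" using l by auto
  obtain i where i: "i < length c" "e = {c ! i, c ! ((i + 1) mod length c)}"
    using e unfolding cycle_edges_def by blast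
  show ?thesis
  proof (cases "Suc i = length c")
    case True
    then have "i = length c - 1" by simp
    then have "e = {hd c, last c}" using i ne by (auto simp: hd_conv_nth last_conv_nth insert_commute)
    then show ?thesis using c by blast
  next
    case False
    then have si: "Suc i < length c" using i by simp
    define A where "A = take (Suc i) c"
    define B where "B = drop (Suc i) c"
    have cAB: "c = A @ B" unfolding A_def B_def by simp
    have An: "A \<noteq> []" and Bn: "B \<noteq> []" unfolding A_def B_def using si by auto
    have hB: "hd B = c ! Suc i" unfolding B_def using si by (simp add: hd_drop_conv_nth)
    have lA: "last A = c ! i" unfolding A_def using si last_drop_take[of 0 i c] by simp
    have eq: "e = {hd (B @ A), last (B @ A)}" using i si hB lA An Bn by (simp add: insert_commute)
    have wAB: "walk E A" "walk E B" "{last A, hd B} \<in> E"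
      using w An Bn unfolding cAB by (auto simp: walk_append)
    have cl2: "{last B, hd A} \<in> E" using cl An Bn unfolding cAB by simp
    have "cyc V E (B @ A)"
      unfolding cyc_def using l d Vc wAB cl2 An Bn unfolding cAB
      by (auto simp: walk_append insert_commute)
    moreover have "cycle_edges (B @ A) = cycle_edges c" unfolding cAB by (rule cycle_edges_swap)
    moreover have "set (B @ A) = set c" "length (B @ A) = length c" unfolding cAB by auto
    ultimately show ?thesis using eq by blast
  qed
qed

lemma cyc_rev: "cyc V E P \<Longrightarrow> cyc V E (rev P)"
  unfolding cyc_def by (auto simp: walk_rev hd_rev last_rev insert_commute)

theorem lemma5p1:
  fixes V :: "'a set" and E :: "'a set set" and C1 C2 :: "'a list"
  assumes "finite V" and "graph V E"
    and "simple_cycle V E C1" and "simple_cycle V E C2"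
    and "cycle_edges C1 \<noteq> cycle_edges C2"
    and "cycle_edges C1 \<inter> cycle_edges C2 \<noteq> {}"
    and "\<forall>C. simple_cycle V E C \<and> length C \<le> length C1 + length C2 \<longrightarrow> \<not> removable V E C"
  shows "is_complete_graph (cycle_verts C1 \<union> cycle_verts C2)
           (induced_edges E (cycle_verts C1 \<union> cycle_verts C2))"
proof -
  note NR = assms(7)
  define L where "L = length C1 + length C2"
  have c1: "cyc V E C1" and c2: "cyc V E C2" using assms(3,4) by (simp_all add: simple_cycle_cyc)
  obtain e where e1: "e \<in> cycle_edges C1" and e2: "e \<in> cycle_edges C2" using assms(6) by blast
  obtain P where P: "cyc V E P" "set P = set C1" "length P = length C1" "cycle_edges P = cycle_edges C1"
    "e = {hd P, last P}" using cyc_normalize[OF c1 e1] by blast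
  obtain Q0 where Q0: "cyc V E Q0" "set Q0 = set C2" "length Q0 = length C2" "cycle_edges Q0 = cycle_edges C2"
    "e = {hd Q0, last Q0}" using cyc_normalize[OF c2 e2] by blast
  have dP: "distinct P" "2 < length P" using P(1) by (auto simp: cyc_def)
  have hlP: "hd P \<noteq> last P"
    using dP by (cases P) (auto simp: last_in_set) 
  obtain Q where Q: "cyc V E Q" "set Q = set C2" "length Q = length C2" "cycle_edges Q = cycle_edges C2"
    "hd Q = hd P" "last Q = last P"
  proof (cases "hd Q0 = hd P")
    case True
    then have "last Q0 = last P" using Q0(5) P(5) hlP by (auto simp: doubleton_eq_iff)
    then show ?thesis using that Q0 True by blast
  next
    case False
    then have "hd Q0 = last P" "last Q0 = hd P" using Q0(5) P(5) by (auto simp: doubleton_eq_iff)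
    moreover have "cyc V E (rev Q0)" using cyc_rev Q0(1) by blast
    moreover have "cycle_edges (rev Q0) = cycle_edges C2" using Q0(4) cycle_edges_rev by metis
    ultimately show ?thesis using that[of "rev Q0"] Q0 by (simp add: hd_rev last_rev)
  qed
  have PQ: "P \<noteq> Q" using P(4) Q(4) assms(5) by auto
  have clP: "clique E (set P)"
    using ear_clique[OF NR P(1) Q(1) Q(5)[symmetric] Q(6)[symmetric] PQ] P(3) Q(3) by simp
  have clQ: "clique E (set Q)"
    using ear_clique[OF NR Q(1) P(1) Q(5) Q(6) PQ[symmetric]] P(3) Q(3) by simp
  define u where "u = hd P"
  define v where "v = last P"
  have uv: "u \<in> set P" "v \<in> set P" "u \<in> set Q" "v \<in> set Q" "u \<noteq> v"
  proof -
    have Pn: "P \<noteq> []" using dP by auto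
    have Qn: "Q \<noteq> []" using Q(1) by (auto simp: cyc_def)
    show "u \<in> set P" "v \<in> set P" using Pn unfolding u_def v_def by simp_all
    show "u \<in> set Q" "v \<in> set Q" using Qn Q(5,6) hd_in_set[OF Qn] last_in_set[OF Qn]
      unfolding u_def v_def by simp_all
    show "u \<noteq> v" using hlP unfolding u_def v_def .
  qed
  have VP: "set P \<subseteq> V" "set Q \<subseteq> V" using P(1) Q(1) by (auto simp: cyc_def)
  define U where "U = set P \<union> set Q"
  have clU: "clique E U" unfolding clique_def
  proof (intro ballI impI)
    fix x y assume xy: "x \<in> U" "y \<in> U" "x \<noteq> y"
    have main: "{x, y} \<in> E" if x: "x \<in> set P" and y: "y \<in> set Q" and "x \<noteq> y" for x y
    proof (cases "x \<in> set Q \<or> y \<in> set P")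
      case True
      then show ?thesis using clP clQ x y \<open>x \<noteq> y\<close> cliqueD by metis
    next
      case False
      let ?c = "[x, u, y, v]"
      have ne: "x \<noteq> u" "x \<noteq> v" "y \<noteq> u" "y \<noteq> v" using False uv by auto
      have edges: "{x, u} \<in> E" "{u, y} \<in> E" "{y, v} \<in> E" "{v, x} \<in> E"
        using cliqueD[OF clP x uv(1)] cliqueD[OF clQ uv(3) y] cliqueD[OF clQ y uv(4)]
          cliqueD[OF clP uv(2) x] ne by auto
      have "cyc V E ?c" unfolding cyc_def using ne uv edges \<open>x \<noteq> y\<close> x y VP by auto
      moreover have "length ?c \<le> length C1 + length C2" using dP P(3) Q(1) Q(3) by (auto simp: cyc_def)
      ultimately have "clique E (set ?c)" using F1[OF NR, of ?c] by simp
      then show ?thesis using cliqueD \<open>x \<noteq> y\<close> by fastforce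
    qed
    show "{x, y} \<in> E"
      using xy main[of x y] main[of y x] cliqueD[OF clP, of x y] cliqueD[OF clQ, of x y]
      unfolding U_def by (auto simp: insert_commute)
  qed
  have finU: "finite U" unfolding U_def by simp
  obtain f where f: "bij_betw f U {0..<card U}" using ex_bij_betw_finite_nat[OF finU] by blast
  have "graph_iso U (induced_edges E U) {0..<card U} (complete_edges (card U))"
    unfolding graph_iso_def
  proof (intro exI[of _ f] conjI ballI)
    show "bij_betw f U {0..<card U}" by (rule f)
    fix a b assume ab: "a \<in> U" "b \<in> U"
    show "({a, b} \<in> induced_edges E U) = ({f a, f b} \<in> complete_edges (card U))"
    proof (cases "a = b")
      case True
      have sing: "\<And>z p q :: 'x. {z} = {p, q} \<Longrightarrow> p = q"
      proof -
        fix z p q :: 'x assume h: "{z} = {p, q}"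
        then have "p \<in> {z}" "q \<in> {z}" by auto
        then show "p = q" by simp
      qed
      have "{a} \<notin> E"
      proof
        assume "{a} \<in> E"
        then obtain p q where "{a} = {p, q}" "p \<noteq> q" using assms(2) unfolding graph_def by blast
        then show False using sing by blast
      qed
      moreover have "{f a} \<notin> complete_edges (card U)"
      proof
        assume "{f a} \<in> complete_edges (card U)"
        then obtain p q where "{f a} = {p, q}" "p \<noteq> q" unfolding complete_edges_def by blast
        then show False using sing by blast
      qed
      ultimately show ?thesis using True unfolding induced_edges_def by simp
    next
      case False
      then have "f a \<noteq> f b" "f a < card U" "f b < card U"
        using f ab unfolding bij_betw_def inj_on_def by auto
      then have "{f a, f b} \<in> complete_edges (card U)" unfolding complete_edges_def by blast
      moreover have "{a, b} \<in> induced_edges E U"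
        using cliqueD[OF clU ab False] ab unfolding induced_edges_def by auto
      ultimately show ?thesis by simp
    qed
  qed
  moreover have "cycle_verts C1 \<union> cycle_verts C2 = U" unfolding U_def cycle_verts_def using P(2) Q(2) by simp
  ultimately show ?thesis unfolding is_complete_graph_def by metis
qed


end
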